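(* Consider an $N$-player game where player $i$ has a convex compact set $X_i\subseteq\mathbb{R}^{n_i}$ and a real-valued objective $f_i$ with $f_i(\cdot,x_{-i})$ $\rho_i$-weakly convex on $\mathbb{R}^{n_i}$ for every $x_{-i}$, and let $0<\eta<\min_i\rho_i^{-1}$. Suppose that for every $i$ and $x_{-i}$ the subdifferential map $\partial_{x_i}f_i(\cdot,x_{-i})$ is $L_i$-Lipschitz. Let $x^*\in X$ be a QNE of the Moreau-smoothed game, i.e. $\nabla_{x_i}f_i^\eta(x_i^*,x_{-i}^* )^\top(x_i-x_i^* )\ge0$ for all $x_i\in X_i$ and all $i$, and suppose $\|\nabla_{x_i}f_i^\eta(x_i^*,x_{-i}^* )\|\le M^*$ for all $i$. Then $x^*$ is an $\eta LDM^*$-QNE of the original game, where $L\triangleq\max_iL_i$ and $D\triangleq\max_i\operatorname{diam}(X_i)$.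
   Context: A function $g$ is $\rho$-weakly convex if $g+\frac\rho2\|\cdot\|^2$ is convex; its subdifferential is $\partial g(x)=\partial(g+\frac\rho2\|\cdot\|^2)(x)-\rho x$. $f_i^\eta(x_i,x_{-i})\triangleq\min_{y\in\mathbb{R}^{n_i}}\{f_i(y,x_{-i})+\frac1{2\eta}\|y-x_i\|^2\}$ is the Moreau envelope in $x_i$ (differentiable in $x_i$ for $\eta<\rho_i^{-1}$). A set-valued map $F$ is $L$-Lipschitz if $F(u)\subseteq F(v)+L\|u-v\|\mathbb{B}$ for all $u,v$, with $\mathbb{B}$ the closed unit ball. For $\epsilon\ge0$, $x^*\in X$ is an $\epsilon$-QNE of the original game if for every $i$, $f_i'(x_i^*,x_{-i}^*;x_i-x_i^* )\ge-\epsilon$ for all $x_i\in X_i$, where $f_i'(\cdot,x_{-i}^*;d)$ is the directional derivative of $f_i(\cdot,x^*_{-i})$. *)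

theory Defs
  imports "HOL-Analysis.Analysis"
begin

text \<open>Joint strategy profiles live in real^'j; the coordinate set 'j is partitioned
 into blocks B i, and player i's space R^(n_i) (n_i = card (B i)) is the coordinate
 subspace subsp (B i).\<close>

definition subsp :: "'j::finite set \<Rightarrow> (real^'j) set" where
  "subsp B = {y. \<forall>j. j \<notin> B \<longrightarrow> y$j = 0}"

definition blk :: "'j::finite set \<Rightarrow> real^'j \<Rightarrow> real^'j" where
  "blk B x = (\<chi> j. if j \<in> B then x$j else 0)"

definition upd :: "'j::finite set \<Rightarrow> real^'j \<Rightarrow> real^'j \<Rightarrow> real^'j" where
  "upd B x y = (\<chi> j. if j \<in> B then y$j else x$j)"

definition weakly_convex_on :: "'a::real_inner set \<Rightarrow> real \<Rightarrow> ('a \<Rightarrow> real) \<Rightarrow> bool" where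
  "weakly_convex_on S \<rho> g \<longleftrightarrow> convex_on S (\<lambda>z. g z + \<rho>/2 * (norm z)^2)"

definition conv_subdiff :: "'a::real_inner set \<Rightarrow> ('a \<Rightarrow> real) \<Rightarrow> 'a \<Rightarrow> 'a set" where
  "conv_subdiff S h y = {v \<in> S. \<forall>z\<in>S. h y + v \<bullet> (z - y) \<le> h z}"

definition wc_subdiff :: "'a::real_inner set \<Rightarrow> real \<Rightarrow> ('a \<Rightarrow> real) \<Rightarrow> 'a \<Rightarrow> 'a set" where
  "wc_subdiff S \<rho> g y = (\<lambda>v. v - \<rho> *\<^sub>R y) ` conv_subdiff S (\<lambda>z. g z + \<rho>/2 * (norm z)^2) y"

definition set_lipschitz_on :: "'a::real_normed_vector set \<Rightarrow> real \<Rightarrow> ('a \<Rightarrow> 'a set) \<Rightarrow> bool" where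
  "set_lipschitz_on S L F \<longleftrightarrow>
     (\<forall>u\<in>S. \<forall>v\<in>S. F u \<subseteq> {a + b | a b. a \<in> F v \<and> norm b \<le> L * dist u v})"

definition moreau :: "'a::real_normed_vector set \<Rightarrow> ('a \<Rightarrow> real) \<Rightarrow> real \<Rightarrow> 'a \<Rightarrow> real" where
  "moreau S g \<eta> x = (INF y\<in>S. g y + 1/(2*\<eta>) * (norm (y - x))^2)"

end

theory Submission
  imports Defs
begin

lemma subsp_add: "x \<in> subsp B \<Longrightarrow> y \<in> subsp B \<Longrightarrow> x + y \<in> subsp B"
  by (auto simp: subsp_def)
lemma subsp_diff: "x \<in> subsp B \<Longrightarrow> y \<in> subsp B \<Longrightarrow> x - y \<in> subsp B"
  by (auto simp: subsp_def)
lemma subsp_scale: "x \<in> subsp B \<Longrightarrow> c *\<^sub>R x \<in> subsp B"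
  by (auto simp: subsp_def)
lemma subsp_zero: "0 \<in> subsp B"
  by (auto simp: subsp_def)
lemma subspace_subsp: "subspace (subsp B)"
  unfolding subspace_def by (auto simp: subsp_def)
lemma convex_subsp: "convex (subsp B)"
  by (simp add: subspace_imp_convex subspace_subsp)
lemma closed_subsp: "closed (subsp B)"
proof -
  have "subsp B = (\<Inter>j\<in>-B. {y. y$j = 0})" by (auto simp: subsp_def)
  moreover have "closed {y::real^'a. y$j = 0}" for j
    by (intro closed_Collect_eq continuous_intros)
  ultimately show ?thesis by auto
qed
lemma blk_in: "blk B x \<in> subsp B"
  by (auto simp: subsp_def blk_def)
lemma blk_id: "y \<in> subsp B \<Longrightarrow> blk B y = y"
  by (auto simp: subsp_def blk_def vec_eq_iff)
lemma blk_lin: "blk B (a *\<^sub>R x + b *\<^sub>R y) = a *\<^sub>R blk B x + b *\<^sub>R blk B y"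
  by (auto simp: blk_def vec_eq_iff)
lemma upd_blk: "upd B x (blk B x) = x"
  by (auto simp: upd_def blk_def vec_eq_iff)
lemma continuous_blk: "continuous_on UNIV (blk B)"
proof -
  have "blk B = (\<lambda>x. \<chi> j. if j \<in> B then x$j else 0)" by (auto simp: blk_def fun_eq_iff)
  moreover have "continuous_on UNIV (\<lambda>x::real^'a. \<chi> j. if j \<in> B then x$j else 0)"
  proof (intro continuous_on_vec_lambda)
    fix j show "continuous_on UNIV (\<lambda>x::real^'a. if j \<in> B then x$j else 0)"
      by (cases "j \<in> B") (auto intro!: continuous_intros)
  qed
  ultimately show ?thesis by simp
qed

lemma dirderiv_convex:
  fixes h :: "'a::real_inner \<Rightarrow> real"
  assumes cvx: "convex_on S h" and sub: "subspace S" and x: "x \<in> S" and d: "d \<in> S"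
    and u: "u \<in> conv_subdiff S h x"
  shows "\<exists>LQ. ((\<lambda>t. (h (x + t *\<^sub>R d) - h x) / t) \<longlongrightarrow> LQ) (at_right 0) \<and> LQ \<ge> u \<bullet> d"
proof -
  define Q where "Q = (\<lambda>t. (h (x + t *\<^sub>R d) - h x) / t)"
  have inS: "x + t *\<^sub>R d \<in> S" for t
    using sub x d by (simp add: subspace_add subspace_scale)
  have bnd: "u \<bullet> d \<le> Q a" if "0 < a" for a
  proof -
    have "h x + u \<bullet> ((x + a *\<^sub>R d) - x) \<le> h (x + a *\<^sub>R d)"
      using u inS unfolding conv_subdiff_def by blast
    hence "a * (u \<bullet> d) \<le> h (x + a *\<^sub>R d) - h x" by (simp add: inner_commute)
    thus ?thesis using that unfolding Q_def by (simp add: field_simps)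
  qed
  have mono: "Q a \<le> Q b" if "0 < a" "a \<le> b" for a b
  proof -
    have b0: "b > 0" using that by simp
    have eq: "x + a *\<^sub>R d = (1 - a/b) *\<^sub>R x + (a/b) *\<^sub>R (x + b *\<^sub>R d)"
      using b0 by (simp add: algebra_simps)
    have "h (x + a *\<^sub>R d) \<le> (1 - a/b) * h x + (a/b) * h (x + b *\<^sub>R d)"
      unfolding eq by (rule convex_onD[OF cvx]) (use that b0 x inS in auto)
    hence "h (x + a *\<^sub>R d) - h x \<le> (a/b) * (h (x + b *\<^sub>R d) - h x)"
      by (simp add: algebra_simps)
    hence "(h (x + a *\<^sub>R d) - h x) / a \<le> (h (x + b *\<^sub>R d) - h x) / b"
      using that b0 by (simp add: field_simps)
    thus ?thesis unfolding Q_def .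
  qed
  have lim: "(Q \<longlongrightarrow> Inf (Q ` ({0<..} \<inter> {0<..}))) (at 0 within ({0<..} \<inter> {0<..}))"
    by (rule Lim_right_bound[where K="u \<bullet> d"]) (use mono bnd in auto)
  have "Inf (Q ` {0<..}) \<ge> u \<bullet> d"
    by (rule cInf_greatest) (use bnd in auto)
  with lim show ?thesis unfolding Q_def by auto
qed

lemma dirderiv_wc:
  fixes g :: "'a::real_inner \<Rightarrow> real"
  assumes wc: "weakly_convex_on S \<rho> g" and sub: "subspace S" and x: "x \<in> S" and d: "d \<in> S"
    and w: "w \<in> wc_subdiff S \<rho> g x"
  shows "\<exists>l. ((\<lambda>t. (g (x + t *\<^sub>R d) - g x) / t) \<longlongrightarrow> l) (at_right 0) \<and> l \<ge> w \<bullet> d"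
proof -
  define h where "h = (\<lambda>z. g z + \<rho>/2 * (norm z)^2)"
  obtain u where u: "u \<in> conv_subdiff S h x" and wu: "w = u - \<rho> *\<^sub>R x"
    using w unfolding wc_subdiff_def h_def by auto
  have cvx: "convex_on S h" using wc unfolding weakly_convex_on_def h_def .
  obtain LQ where LQ: "((\<lambda>t. (h (x + t *\<^sub>R d) - h x) / t) \<longlongrightarrow> LQ) (at_right 0)" "LQ \<ge> u \<bullet> d"
    using dirderiv_convex[OF cvx sub x d u] by blast
  have lim2: "((\<lambda>t. (h (x + t *\<^sub>R d) - h x) / t - \<rho> * (x \<bullet> d) - \<rho>/2 * t * (d \<bullet> d))
     \<longlongrightarrow> LQ - \<rho> * (x \<bullet> d) - \<rho>/2 * 0 * (d \<bullet> d)) (at_right 0)"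
    by (intro tendsto_intros LQ(1))
  have ev: "\<forall>\<^sub>F t in at_right 0. (h (x + t *\<^sub>R d) - h x) / t - \<rho> * (x \<bullet> d) - \<rho>/2 * t * (d \<bullet> d)
     = (g (x + t *\<^sub>R d) - g x) / t"
  proof (rule eventually_at_rightI[of 0 1])
    fix t :: real assume "t \<in> {0<..<1}"
    hence t: "t \<noteq> 0" by auto
    have n: "(norm (x + t *\<^sub>R d))^2 = (norm x)^2 + 2 * t * (x \<bullet> d) + t^2 * (d \<bullet> d)"
      unfolding power2_norm_eq_inner by (simp add: inner_add_left inner_add_right inner_commute power2_eq_square algebra_simps)
    show "(h (x + t *\<^sub>R d) - h x) / t - \<rho> * (x \<bullet> d) - \<rho>/2 * t * (d \<bullet> d)
     = (g (x + t *\<^sub>R d) - g x) / t"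
      unfolding h_def n using t by (simp add: field_simps power2_eq_square)
  qed simp
  have "((\<lambda>t. (g (x + t *\<^sub>R d) - g x) / t) \<longlongrightarrow> LQ - \<rho> * (x \<bullet> d)) (at_right 0)"
    using tendsto_cong[OF ev] lim2 by simp
  moreover have "LQ - \<rho> * (x \<bullet> d) \<ge> w \<bullet> d"
    using LQ(2) unfolding wu by (simp add: inner_diff_left)
  ultimately show ?thesis by blast
qed

lemma limit_le_aux:
  fixes a b C :: real
  assumes C: "C \<ge> 0" and H: "\<And>t. 0 < t \<Longrightarrow> t \<le> 1 \<Longrightarrow> b - t * C \<le> a"
  shows "b \<le> a"
proof (rule ccontr)
  assume "\<not> b \<le> a"
  hence ab: "a < b" by simp
  define t where "t = min 1 ((b - a) / (C + 1))"
  have t0: "0 < t" "t \<le> 1" using ab C by (auto simp: t_def)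
  have "t * C \<le> (b - a) / (C + 1) * C"
    using C by (intro mult_right_mono) (auto simp: t_def)
  also have "\<dots> < b - a"
    using ab C by (simp add: field_simps)
  finally show False using H[OF t0] by simp
qed

lemma prox_exists:
  fixes g :: "real^'j::finite \<Rightarrow> real"
  assumes wc: "weakly_convex_on (subsp B) \<rho> g" and rho: "\<rho> \<ge> 0" and eta: "\<eta> > 0"
    and small: "\<eta> * \<rho> < 1" and y0: "y0 \<in> subsp B"
  shows "\<exists>p\<in>subsp B. \<forall>z\<in>subsp B.
     g p + 1/(2*\<eta>) * (norm (p - y0))^2 \<le> g z + 1/(2*\<eta>) * (norm (z - y0))^2"
proof -
  define S where "S = subsp B"
  define h where "h = (\<lambda>z. g z + \<rho>/2 * (norm z)^2)"
  define ht where "ht = (\<lambda>z. h (blk B z))"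
  define \<Phi> where "\<Phi> = (\<lambda>z. g z + 1/(2*\<eta>) * (norm (z - y0))^2)"
  have cvx: "convex_on S h" using wc unfolding weakly_convex_on_def h_def S_def .
  have cvxt: "convex_on UNIV ht"
  proof (rule convex_onI)
    fix t :: real and x y :: "real^'j" assume t: "0 < t" "t < 1"
    show "ht ((1 - t) *\<^sub>R x + t *\<^sub>R y) \<le> (1 - t) * ht x + t * ht y"
      unfolding ht_def blk_lin
      by (rule convex_onD[OF cvx]) (use t in \<open>auto simp: S_def blk_in\<close>)
  qed simp
  have contt: "continuous_on UNIV ht"
    by (rule convex_on_continuous[OF _ cvxt]) simp
  have ht_h: "z \<in> S \<Longrightarrow> ht z = h z" for z by (simp add: ht_def blk_id S_def)
  obtain m0 where m0: "m0 \<in> cball y0 1" "\<forall>y\<in>cball y0 1. ht m0 \<le> ht y"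
  proof -
    have "cball y0 1 \<noteq> {}" by (simp add: cball_eq_empty)
    moreover have "continuous_on (cball y0 1) ht" by (rule continuous_on_subset[OF contt subset_UNIV])
    ultimately obtain a where "a \<in> cball y0 1" "\<forall>y\<in>cball y0 1. ht a \<le> ht y"
      using continuous_attains_inf[OF compact_cball] by metis
    thus ?thesis by (rule that)
  qed
  define m where "m = ht m0"
  define K where "K = h y0 - m"
  have y0S: "y0 \<in> S" using y0 by (simp add: S_def)
  have K0: "K \<ge> 0"
  proof -
    have "ht m0 \<le> ht y0" using m0(2) by simp
    thus ?thesis using ht_h[OF y0S] unfolding K_def m_def by simp
  qed
  have lowb: "h y \<ge> h y0 - K * (1 + norm (y - y0))" if yS: "y \<in> S" for y
  proof (cases "norm (y - y0) \<le> 1")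
    case True
    hence "ht y \<ge> m" using m0(2) unfolding m_def by (simp add: dist_norm norm_minus_commute)
    hence "h y \<ge> h y0 - K" using yS ht_h unfolding K_def by simp
    moreover have "K * (1 + norm (y - y0)) \<ge> K" using K0 by (simp add: distrib_left)
    ultimately show ?thesis by linarith
  next
    case False
    define r where "r = norm (y - y0)"
    have r1: "r > 1" using False r_def by simp
    define z where "z = (1 - 1/r) *\<^sub>R y0 + (1/r) *\<^sub>R y"
    have zS: "z \<in> S" unfolding z_def S_def
      using y0 yS by (intro subsp_add subsp_scale) (auto simp: S_def)
    have "z - y0 = (1/r) *\<^sub>R (y - y0)" unfolding z_def by (simp add: algebra_simps)
    hence "norm (z - y0) = 1" using r1 by (auto simp: r_def)
    hence "m \<le> ht z" using m0(2) unfolding m_def by (simp add: dist_norm norm_minus_commute)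
    hence mz: "m \<le> h z" using ht_h zS by simp
    have "h z \<le> (1 - 1/r) * h y0 + (1/r) * h y"
      unfolding z_def by (rule convex_onD[OF cvx]) (use r1 y0S yS in auto)
    hence "r * h z \<le> (r - 1) * h y0 + h y" using r1
      by (simp add: field_simps)
    moreover have "r * m \<le> r * h z" using mz r1 by simp
    ultimately have "r * m \<le> (r - 1) * h y0 + h y" by linarith
    hence "h y \<ge> h y0 - r * K" unfolding K_def by (simp add: algebra_simps)
    moreover have "r * K \<le> K * (1 + r)" using K0 by (simp add: algebra_simps)
    ultimately show ?thesis unfolding r_def by linarith
  qed
  define \<alpha> where "\<alpha> = 1/(2*\<eta>) - \<rho>/2"
  have \<alpha>0: "\<alpha> > 0" unfolding \<alpha>_def using eta small by (simp add: field_simps)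
  define n where "n = norm y0"
  define \<beta> where "\<beta> = K + \<rho> * n"
  have \<beta>0: "\<beta> \<ge> 0" using K0 rho by (simp add: \<beta>_def n_def)
  define R where "R = (\<beta> + K) / \<alpha> + 1"
  have R1: "R \<ge> 1" using \<alpha>0 \<beta>0 K0 by (simp add: R_def)
  have far: "\<Phi> z > \<Phi> y0" if zS: "z \<in> S" and zR: "norm (z - y0) > R" for z
  proof -
    define r where "r = norm (z - y0)"
    have rR: "r > R" using zR r_def by simp
    have nz: "norm z \<le> n + r" unfolding n_def r_def using norm_triangle_sub[of z y0] by simp
    have nz2: "(norm z)^2 \<le> (n + r)^2" using nz by (simp add: power_mono)
    have "g z = h z - \<rho>/2 * (norm z)^2" by (simp add: h_def)
    also have "\<dots> \<ge> h y0 - K * (1 + r) - \<rho>/2 * (n + r)^2"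
    proof -
      have "\<rho>/2 * (norm z)^2 \<le> \<rho>/2 * (n + r)^2" using nz2 rho by (intro mult_left_mono) auto
      thus ?thesis using lowb[OF zS] unfolding r_def by linarith
    qed
    finally have gz: "g z \<ge> h y0 - K * (1 + r) - \<rho>/2 * (n + r)^2" .
    have "\<alpha> * r * r \<ge> \<alpha> * R * r" using \<alpha>0 rR R1 by (intro mult_right_mono mult_left_mono) auto
    moreover have "\<alpha> * R = \<beta> + K + \<alpha>" using \<alpha>0 by (simp add: R_def field_simps)
    ultimately have "\<alpha> * r * r \<ge> (\<beta> + K + \<alpha>) * r" by simp
    moreover have "(\<beta> + K + \<alpha>) * r > \<beta> * r + K"
    proof -
      have "K * 1 \<le> K * r" using K0 rR R1 by (intro mult_left_mono) auto
      moreover have "\<alpha> * r > 0" using \<alpha>0 rR R1 by simp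
      ultimately show ?thesis by (simp add: distrib_right)
    qed
    ultimately have key: "\<alpha> * r * r > \<beta> * r + K" by linarith
    have "\<Phi> z = g z + 1/(2*\<eta>) * r^2" by (simp add: \<Phi>_def r_def)
    also have "\<dots> \<ge> h y0 - K * (1 + r) - \<rho>/2 * (n + r)^2 + 1/(2*\<eta>) * r^2" using gz by simp
    also have "h y0 - K * (1 + r) - \<rho>/2 * (n + r)^2 + 1/(2*\<eta>) * r^2
       = g y0 + (\<alpha> * r * r - \<beta> * r - K)"
      by (simp add: h_def \<alpha>_def \<beta>_def n_def power2_eq_square algebra_simps)
    finally have "\<Phi> z \<ge> g y0 + (\<alpha> * r * r - \<beta> * r - K)" .
    moreover have "g y0 = \<Phi> y0" by (simp add: \<Phi>_def)
    ultimately show ?thesis using key by linarith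
  qed
  define KS where "KS = S \<inter> cball y0 R"
  have cKS: "compact KS" unfolding KS_def S_def
    by (intro closed_Int_compact closed_subsp compact_cball)
  have y0K: "y0 \<in> KS" using y0S R1 by (simp add: KS_def)
  have contPhi: "continuous_on KS \<Phi>"
  proof -
    have cK: "continuous_on KS ht" by (rule continuous_on_subset[OF contt subset_UNIV])
    have "continuous_on KS (\<lambda>z. ht z - \<rho>/2 * (norm z)^2 + 1/(2*\<eta>) * (norm (z - y0))^2)"
      by (intro continuous_intros cK)
    moreover have "\<And>z. z \<in> KS \<Longrightarrow> ht z - \<rho>/2 * (norm z)^2 + 1/(2*\<eta>) * (norm (z - y0))^2 = \<Phi> z"
      using ht_h by (simp add: KS_def h_def \<Phi>_def)
    ultimately show ?thesis by (rule continuous_on_eq)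
  qed
  obtain p where p: "p \<in> KS" "\<forall>z\<in>KS. \<Phi> p \<le> \<Phi> z"
    using continuous_attains_inf[OF cKS _ contPhi] y0K by blast
  have "\<forall>z\<in>S. \<Phi> p \<le> \<Phi> z"
  proof
    fix z assume zS: "z \<in> S"
    show "\<Phi> p \<le> \<Phi> z"
    proof (cases "norm (z - y0) \<le> R")
      case True thus ?thesis using p zS by (simp add: KS_def dist_norm norm_minus_commute)
    next
      case False
      hence "\<Phi> z > \<Phi> y0" using far[OF zS] by simp
      moreover have "\<Phi> p \<le> \<Phi> y0" using p(2) y0K by blast
      ultimately show ?thesis by simp
    qed
  qed
  thus ?thesis using p(1) unfolding KS_def S_def \<Phi>_def by blast
qed

lemma core:
  fixes g :: "real^'j::finite \<Rightarrow> real"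
  assumes wc: "weakly_convex_on (subsp B) \<rho> g" and rho: "\<rho> \<ge> 0" and eta: "\<eta> > 0"
    and small: "\<eta> * \<rho> < 1" and xb: "xb \<in> subsp B" and v: "v \<in> subsp B"
    and der: "((\<lambda>y. moreau (subsp B) g \<eta> y) has_derivative (\<lambda>h. v \<bullet> h)) (at xb within subsp B)"
  shows "v \<in> wc_subdiff (subsp B) \<rho> g (xb - \<eta> *\<^sub>R v)"
proof -
  define S where "S = subsp B"
  define h where "h = (\<lambda>z. g z + \<rho>/2 * (norm z)^2)"
  define \<Phi> where "\<Phi> = (\<lambda>y z. g z + 1/(2*\<eta>) * (norm (z - y))^2)"
  define env where "env = (\<lambda>y. moreau S g \<eta> y)"
  have cvx: "convex_on S h" using wc unfolding weakly_convex_on_def h_def S_def .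
  have xbS: "xb \<in> S" using xb by (simp add: S_def)
  obtain p where pS: "p \<in> S" and pmin: "\<forall>z\<in>S. \<Phi> xb p \<le> \<Phi> xb z"
    using prox_exists[OF wc rho eta small xb] unfolding S_def \<Phi>_def by blast
  define c where "c = (1/\<eta>) *\<^sub>R (xb - p)"
  define \<alpha> where "\<alpha> = 1/(2*\<eta>) - \<rho>/2"
  have \<alpha>0: "\<alpha> > 0" unfolding \<alpha>_def using eta small by (simp add: field_simps)
  have cS: "c \<in> S" unfolding c_def S_def using xbS pS
    by (intro subsp_scale subsp_diff) (auto simp: S_def)
  have cpS: "c + \<rho> *\<^sub>R p \<in> S" using cS pS unfolding S_def by (intro subsp_add subsp_scale) auto
  have subg: "h p + (c + \<rho> *\<^sub>R p) \<bullet> (z - p) \<le> h z" if zS: "z \<in> S" for z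
  proof (rule limit_le_aux[where C="\<alpha> * (norm (z - p))^2"])
    show "0 \<le> \<alpha> * (norm (z - p))^2" using \<alpha>0 by simp
  next
    fix t :: real assume t: "0 < t" "t \<le> 1"
    define e where "e = z - p"
    have zt: "(1 - t) *\<^sub>R p + t *\<^sub>R z = p + t *\<^sub>R e" by (simp add: e_def algebra_simps)
    have ztS: "p + t *\<^sub>R e \<in> S" unfolding S_def e_def using pS zS
      by (intro subsp_add subsp_scale subsp_diff) (auto simp: S_def)
    have hc: "h (p + t *\<^sub>R e) \<le> (1 - t) * h p + t * h z"
      unfolding zt[symmetric] by (rule convex_onD[OF cvx]) (use t pS zS in auto)
    have mn: "\<Phi> xb p \<le> \<Phi> xb (p + t *\<^sub>R e)" using pmin ztS by blast
    have n1: "(norm (p + t *\<^sub>R e))^2 = (norm p)^2 + 2 * t * (p \<bullet> e) + t^2 * (e \<bullet> e)"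
      unfolding power2_norm_eq_inner by (simp add: inner_add_left inner_add_right inner_commute power2_eq_square algebra_simps)
    have n2: "(norm (p + t *\<^sub>R e - xb))^2 = (norm (p - xb))^2 + 2 * t * ((p - xb) \<bullet> e) + t^2 * (e \<bullet> e)"
    proof -
      have "p + t *\<^sub>R e - xb = (p - xb) + t *\<^sub>R e" by simp
      thus ?thesis
        unfolding power2_norm_eq_inner by (simp only:) (simp add: inner_add_left inner_add_right inner_commute power2_eq_square algebra_simps)
    qed
    have ee: "e \<bullet> e = (norm (z - p))^2" by (simp add: e_def power2_norm_eq_inner)
    have cpe: "(c + \<rho> *\<^sub>R p) \<bullet> e = (1/\<eta>) * ((xb - p) \<bullet> e) + \<rho> * (p \<bullet> e)"
      by (simp add: c_def inner_add_left)
    have "\<Phi> xb (p + t *\<^sub>R e) = h (p + t *\<^sub>R e) - \<rho>/2 * (norm (p + t *\<^sub>R e))^2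
        + 1/(2*\<eta>) * (norm (p + t *\<^sub>R e - xb))^2"
      by (simp add: \<Phi>_def h_def)
    moreover have "\<Phi> xb p = h p - \<rho>/2 * (norm p)^2 + 1/(2*\<eta>) * (norm (p - xb))^2"
      by (simp add: \<Phi>_def h_def)
    ultimately have "h p - \<rho>/2 * (norm p)^2 + 1/(2*\<eta>) * (norm (p - xb))^2 \<le>
       (1 - t) * h p + t * h z - \<rho>/2 * ((norm p)^2 + 2 * t * (p \<bullet> e) + t^2 * (e \<bullet> e))
        + 1/(2*\<eta>) * ((norm (p - xb))^2 + 2 * t * ((p - xb) \<bullet> e) + t^2 * (e \<bullet> e))"
      using mn hc unfolding n1 n2 by linarith
    hence "t * (h p + (c + \<rho> *\<^sub>R p) \<bullet> e - t * (\<alpha> * (e \<bullet> e))) \<le> t * h z"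
      unfolding cpe \<alpha>_def using eta
      by (simp add: field_simps inner_diff_left power2_eq_square)
    hence "h p + (c + \<rho> *\<^sub>R p) \<bullet> e - t * (\<alpha> * (e \<bullet> e)) \<le> h z"
      using t by simp
    thus "h p + (c + \<rho> *\<^sub>R p) \<bullet> (z - p) - t * (\<alpha> * (norm (z - p))^2) \<le> h z"
      unfolding ee[symmetric] e_def .
  qed
  have c_sub: "c \<in> wc_subdiff S \<rho> g p"
  proof -
    have "c + \<rho> *\<^sub>R p \<in> conv_subdiff S h p"
      unfolding conv_subdiff_def using cpS subg by blast
    hence "(c + \<rho> *\<^sub>R p) - \<rho> *\<^sub>R p \<in> wc_subdiff S \<rho> g p"
      unfolding wc_subdiff_def h_def by blast
    thus ?thesis by simp
  qed
  have env_le: "env y \<le> \<Phi> y z" if yS: "y \<in> S" and zS: "z \<in> S" for y z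
  proof -
    obtain q where qS: "q \<in> S" and qmin: "\<forall>z\<in>S. \<Phi> y q \<le> \<Phi> y z"
      using prox_exists[OF wc rho eta small, of y] yS unfolding S_def \<Phi>_def by blast
    have "bdd_below ((\<Phi> y) ` S)" using qmin by (auto simp: bdd_below_def)
    hence "Inf ((\<Phi> y) ` S) \<le> \<Phi> y z" using zS by (simp add: cInf_lower)
    thus ?thesis by (simp add: env_def moreau_def \<Phi>_def)
  qed
  have env_x: "env xb = \<Phi> xb p"
  proof -
    have "Inf ((\<Phi> xb) ` S) = \<Phi> xb p" by (rule cInf_eq_minimum) (use pS pmin in auto)
    thus ?thesis by (simp add: env_def moreau_def \<Phi>_def)
  qed
  define e where "e = v - c"
  have eS: "e \<in> S" unfolding e_def S_def using v cS by (intro subsp_diff) (auto simp: S_def)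
  have lineS: "xb + t *\<^sub>R e \<in> S" for t unfolding S_def using xbS eS
    by (intro subsp_add subsp_scale) (auto simp: S_def)
  define \<psi> where "\<psi> = (\<lambda>t. env xb + t * (c \<bullet> e) + t^2 * (e \<bullet> e) / (2*\<eta>))"
  have upper: "env (xb + t *\<^sub>R e) \<le> \<psi> t" for t
  proof -
    have "env (xb + t *\<^sub>R e) \<le> \<Phi> (xb + t *\<^sub>R e) p" by (rule env_le[OF lineS pS])
    also have "\<Phi> (xb + t *\<^sub>R e) p = \<psi> t"
    proof -
      have "p - (xb + t *\<^sub>R e) = (p - xb) - t *\<^sub>R e" by simp
      hence nn: "(norm (p - (xb + t *\<^sub>R e)))^2 = (norm (p - xb))^2 - 2 * t * ((p - xb) \<bullet> e) + t^2 * (e \<bullet> e)"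
        unfolding power2_norm_eq_inner by (simp only:) (simp add: inner_diff_left inner_diff_right inner_commute power2_eq_square algebra_simps)
      have ce: "c \<bullet> e = - ((p - xb) \<bullet> e) / \<eta>" by (simp add: c_def inner_diff_left)
      show ?thesis unfolding \<psi>_def env_x \<Phi>_def ce nn using eta
        by (simp add: field_simps)
    qed
    finally show ?thesis .
  qed
  have d1: "((\<lambda>t. env (xb + t *\<^sub>R e)) has_derivative (\<lambda>t. v \<bullet> (t *\<^sub>R e))) (at 0)"
  proof -
    have f: "((\<lambda>t. xb + t *\<^sub>R e) has_derivative (\<lambda>t. t *\<^sub>R e)) (at (0::real))"
      by (auto intro!: derivative_eq_intros)
    have "range (\<lambda>t. xb + t *\<^sub>R e) \<subseteq> S" using lineS by auto
    hence g: "(env has_derivative (\<lambda>h. v \<bullet> h)) (at ((\<lambda>t. xb + t *\<^sub>R e) 0) within range (\<lambda>t. xb + t *\<^sub>R e))"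
      using has_derivative_subset[OF der] unfolding env_def S_def by simp
    show ?thesis using has_derivative_in_compose[OF f g] by simp
  qed
  have d1': "((\<lambda>t. env (xb + t *\<^sub>R e)) has_real_derivative (v \<bullet> e)) (at 0)"
  proof -
    have "(\<lambda>t. v \<bullet> (t *\<^sub>R e)) = (*) (v \<bullet> e)" by (auto simp: fun_eq_iff)
    thus ?thesis using d1 unfolding has_field_derivative_def by simp
  qed
  have d2: "(\<psi> has_real_derivative (c \<bullet> e)) (at 0)"
    unfolding \<psi>_def using eta by (auto intro!: derivative_eq_intros)
  have d3: "((\<lambda>t. \<psi> t - env (xb + t *\<^sub>R e)) has_real_derivative (c \<bullet> e - v \<bullet> e)) (at 0)"
    by (rule DERIV_diff[OF d2 d1'])
  have "c \<bullet> e - v \<bullet> e = 0"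
  proof (rule DERIV_local_min[OF d3, of 1])
    show "\<forall>y. \<bar>0 - y\<bar> < 1 \<longrightarrow> \<psi> 0 - env (xb + 0 *\<^sub>R e) \<le> \<psi> y - env (xb + y *\<^sub>R e)"
      using upper by (simp add: \<psi>_def)
  qed simp
  hence "e \<bullet> e = 0" unfolding e_def by (simp add: inner_diff_left inner_diff_right inner_commute)
  hence "e = 0" by simp
  hence vc: "v = c" unfolding e_def by simp
  have "xb - \<eta> *\<^sub>R v = p" using eta unfolding vc c_def by simp
  thus ?thesis using c_sub vc unfolding S_def by simp
qed

lemma lip_nonneg:
  fixes F :: "real^'j::finite \<Rightarrow> (real^'j) set"
  assumes lip: "set_lipschitz_on (subsp B) L F" and j: "j \<in> B"
    and u: "u \<in> subsp B" and v: "v \<in> F u"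
  shows "L \<ge> 0"
proof -
  define u' where "u' = u + axis j 1"
  have ax: "axis j (1::real) \<in> subsp B" using j by (auto simp: subsp_def axis_def)
  have u': "u' \<in> subsp B" unfolding u'_def using u ax by (rule subsp_add)
  have "v \<in> {a + b | a b. a \<in> F u' \<and> norm b \<le> L * dist u u'}"
    using lip u u' v unfolding set_lipschitz_on_def by blast
  then obtain b :: "real^'j" where b: "norm b \<le> L * dist u u'" by auto
  have "dist u u' > 0" unfolding u'_def by (simp add: dist_norm)
  moreover have "L * dist u u' \<ge> 0" using b norm_ge_zero order_trans by blast
  ultimately show ?thesis by (simp add: zero_le_mult_iff)
qed

theorem theorem4p2:
  fixes B :: "'i::finite \<Rightarrow> 'j::finite set"
    and X :: "'i \<Rightarrow> (real^'j) set"
    and f :: "'i \<Rightarrow> real^'j \<Rightarrow> real"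
    and \<rho> Lc :: "'i \<Rightarrow> real"
    and \<eta> M :: real
    and xstar :: "real^'j"
  assumes disj: "\<forall>i k. i \<noteq> k \<longrightarrow> B i \<inter> B k = {}"
    and cover: "(\<Union>i. B i) = UNIV"
    and Xi: "\<forall>i. X i \<subseteq> subsp (B i) \<and> convex (X i) \<and> compact (X i)"
    and rho_nonneg: "\<forall>i. \<rho> i \<ge> 0"
    and wc: "\<forall>i x. weakly_convex_on (subsp (B i)) (\<rho> i) (\<lambda>y. f i (upd (B i) x y))"
    and eta_pos: "\<eta> > 0"
    and eta_small: "\<forall>i. \<eta> * \<rho> i < 1"
    and lip: "\<forall>i x. set_lipschitz_on (subsp (B i)) (Lc i)
                 (wc_subdiff (subsp (B i)) (\<rho> i) (\<lambda>y. f i (upd (B i) x y)))"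
    and xstar_in: "\<forall>i. blk (B i) xstar \<in> X i"
    and qne: "\<forall>i. \<exists>v \<in> subsp (B i).
                ((\<lambda>y. moreau (subsp (B i)) (\<lambda>z. f i (upd (B i) xstar z)) \<eta> y)
                   has_derivative (\<lambda>h. v \<bullet> h)) (at (blk (B i) xstar) within subsp (B i))
              \<and> (\<forall>xi\<in>X i. v \<bullet> (xi - blk (B i) xstar) \<ge> 0)
              \<and> norm v \<le> M"
  shows "\<forall>i. \<forall>xi\<in>X i. \<exists>l.
           ((\<lambda>t. (f i (upd (B i) xstar (blk (B i) xstar + t *\<^sub>R (xi - blk (B i) xstar)))
                   - f i xstar) / t) \<longlongrightarrow> l) (at_right 0)
           \<and> l \<ge> - (\<eta> * Max (range Lc) * Max ((\<lambda>i. diameter (X i)) ` UNIV) * M)"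
proof -
  define Lm where "Lm = Max (range Lc)"
  define D where "D = Max ((\<lambda>i. diameter (X i)) ` UNIV)"
  have vsub: "\<exists>v \<in> subsp (B i). v \<in> wc_subdiff (subsp (B i)) (\<rho> i) (\<lambda>y. f i (upd (B i) xstar y))
       (blk (B i) xstar - \<eta> *\<^sub>R v)
     \<and> (\<forall>xi\<in>X i. v \<bullet> (xi - blk (B i) xstar) \<ge> 0) \<and> norm v \<le> M" for i
  proof -
    obtain v where vS: "v \<in> subsp (B i)" and
      der: "((\<lambda>y. moreau (subsp (B i)) (\<lambda>z. f i (upd (B i) xstar z)) \<eta> y)
                   has_derivative (\<lambda>h. v \<bullet> h)) (at (blk (B i) xstar) within subsp (B i))"
      and vi: "\<forall>xi\<in>X i. v \<bullet> (xi - blk (B i) xstar) \<ge> 0" and vM: "norm v \<le> M"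
      using qne by blast
    have "v \<in> wc_subdiff (subsp (B i)) (\<rho> i) (\<lambda>y. f i (upd (B i) xstar y)) (blk (B i) xstar - \<eta> *\<^sub>R v)"
      using core[OF wc[rule_format] rho_nonneg[rule_format] eta_pos eta_small[rule_format] blk_in vS der] .
    thus ?thesis using vS vi vM by blast
  qed
  have Lm0: "Lm \<ge> 0"
  proof -
    obtain k where jk: "(undefined::'j) \<in> B k" using cover by blast
    obtain v where vS: "v \<in> subsp (B k)" and
      vk: "v \<in> wc_subdiff (subsp (B k)) (\<rho> k) (\<lambda>y. f k (upd (B k) xstar y)) (blk (B k) xstar - \<eta> *\<^sub>R v)"
      using vsub[of k] by blast
    have uS: "blk (B k) xstar - \<eta> *\<^sub>R v \<in> subsp (B k)"
      using blk_in vS by (intro subsp_diff subsp_scale)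
    have "Lc k \<ge> 0" by (rule lip_nonneg[OF lip[rule_format] jk uS vk])
    moreover have "Lc k \<le> Lm" unfolding Lm_def by simp
    ultimately show ?thesis by simp
  qed
  show ?thesis
  proof (intro allI ballI)
    fix i xi assume xi: "xi \<in> X i"
    define S where "S = subsp (B i)"
    define g where "g = (\<lambda>y. f i (upd (B i) xstar y))"
    define xb where "xb = blk (B i) xstar"
    obtain v where vS: "v \<in> S" and
      vw: "v \<in> wc_subdiff S (\<rho> i) g (xb - \<eta> *\<^sub>R v)"
      and vi: "\<forall>xi\<in>X i. v \<bullet> (xi - xb) \<ge> 0" and vM: "norm v \<le> M"
      using vsub[of i] unfolding S_def g_def xb_def by blast
    have xbS: "xb \<in> S" unfolding S_def xb_def by (rule blk_in)
    have uS: "xb - \<eta> *\<^sub>R v \<in> S" using xbS vS unfolding S_def by (intro subsp_diff subsp_scale)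
    have "v \<in> {a + b | a b. a \<in> wc_subdiff S (\<rho> i) g xb \<and> norm b \<le> Lc i * dist (xb - \<eta> *\<^sub>R v) xb}"
      using lip uS xbS vw unfolding set_lipschitz_on_def S_def g_def by blast
    then obtain a b where ab: "v = a + b" and aw: "a \<in> wc_subdiff S (\<rho> i) g xb"
      and bn: "norm b \<le> Lc i * dist (xb - \<eta> *\<^sub>R v) xb" by blast
    have dist_eq: "dist (xb - \<eta> *\<^sub>R v) xb = \<eta> * norm v" using eta_pos by (simp add: dist_norm abs_of_pos)
    have xbX: "xb \<in> X i" using xstar_in unfolding xb_def by blast
    have XS: "X i \<subseteq> S" using Xi unfolding S_def by blast
    define d where "d = xi - xb"
    have dS: "d \<in> S" unfolding d_def S_def using XS xi xbS unfolding S_def by (intro subsp_diff) auto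
    have wcg: "weakly_convex_on S (\<rho> i) g" using wc unfolding S_def g_def by blast
    obtain l where lim: "((\<lambda>t. (g (xb + t *\<^sub>R d) - g xb) / t) \<longlongrightarrow> l) (at_right 0)"
      and la: "l \<ge> a \<bullet> d"
      using dirderiv_wc[OF wcg _ xbS dS aw] subspace_subsp unfolding S_def by blast
    have gxb: "g xb = f i xstar" unfolding g_def xb_def by (simp add: upd_blk)
    have dD: "norm d \<le> D"
    proof -
      have "bounded (X i)" using Xi compact_imp_bounded by blast
      hence "dist xi xb \<le> diameter (X i)" using xi xbX by (rule diameter_bounded_bound)
      moreover have "diameter (X i) \<le> D" unfolding D_def by simp
      ultimately show ?thesis by (simp add: d_def dist_norm)
    qed
    have bB: "norm b \<le> Lm * \<eta> * M"
    proof -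
      have "Lc i * (\<eta> * norm v) \<le> Lm * (\<eta> * norm v)"
        using eta_pos unfolding Lm_def by (intro mult_right_mono) auto
      also have "\<dots> \<le> Lm * (\<eta> * M)" using Lm0 eta_pos vM by (intro mult_left_mono) auto
      finally show ?thesis using bn[unfolded dist_eq] by (simp add: mult.assoc)
    qed
    have "a \<bullet> d = v \<bullet> d - b \<bullet> d" unfolding ab by (simp add: inner_add_left)
    moreover have "v \<bullet> d \<ge> 0" using vi xi unfolding d_def by blast
    moreover have "b \<bullet> d \<le> norm b * norm d" by (rule Cauchy_Schwarz_ineq2[THEN abs_le_D1])
    moreover have "norm b * norm d \<le> (Lm * \<eta> * M) * D"
      using bB dD order_trans[OF norm_ge_zero bB] by (intro mult_mono) auto
    ultimately have "l \<ge> - (\<eta> * Lm * D * M)" using la by (simp add: algebra_simps)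
    moreover have "((\<lambda>t. (f i (upd (B i) xstar (blk (B i) xstar + t *\<^sub>R (xi - blk (B i) xstar)))
                   - f i xstar) / t) \<longlongrightarrow> l) (at_right 0)"
      using lim unfolding gxb by (simp add: g_def xb_def d_def)
    ultimately show "\<exists>l.
           ((\<lambda>t. (f i (upd (B i) xstar (blk (B i) xstar + t *\<^sub>R (xi - blk (B i) xstar)))
                   - f i xstar) / t) \<longlongrightarrow> l) (at_right 0)
           \<and> l \<ge> - (\<eta> * Max (range Lc) * Max ((\<lambda>i. diameter (X i)) ` UNIV) * M)"
      unfolding Lm_def D_def by blast
  qed
qed

end
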